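(* Let $A,B\in\mathbb{Z}$ with $-1\leq A\leq B$, $B\geq 2$ and $2A<B+3$. Let $\mathcal{S}$ be the neighbor set of $T$, $\mathcal{S}^{\ell}$ the neighbor set of $T^{\ell}$, and $\mathcal{S}'=\mathcal{S}^{\ell}\cup\{c\}\cup\mathcal{S}^{\ell}c$ with $\mathcal{S}^{\ell}c=\{s\circ c:s\in\mathcal{S}^{\ell}\}$. Then: (1) if $A>0$, $\mathcal{S}\subset\mathcal{S}'\setminus\{a^Ab,\ a^{-A}b^{-1},\ a^{-A}b^{-1}c\}$; (2) if $A=-1$, $\mathcal{S}\subset\mathcal{S}'\setminus\{a^{-1}b,\ b,\ ab^{-1},\ b^{-1},\ ab^{-1}c,\ b^{-1}c\}$; (3) if $A=0$, $\mathcal{S}\subset\mathcal{S}'\setminus\{ab,\ a^{-1}b^{-1},\ ab^{-1},\ a^{-1}b,\ b,\ b^{-1},\ a^{-1}b^{-1}c,\ ab^{-1}c,\ b^{-1}c\}$. In particular, $\mathcal{S}$ has at least $6$ and at most $10$ elements.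
   Context: Let $a(x,y)=(x+1,y)$, $b(x,y)=(x,y+1)$, $c(x,y)=(-x,-y)$ and let $\Gamma=\{a^pb^qc^r: p,q\in\mathbb{Z},\ r\in\{0,1\}\}$ (products are compositions). Let $M=\begin{pmatrix}0&-B\\1&-A\end{pmatrix}$, $g(\mathbf{x})=M\mathbf{x}+\left(\frac{B-1}{2},0\right)^T$, $\mathcal{D}=\{id,a,\dots,a^{B-2},c\}$ if $B\geq3$ and $\mathcal{D}=\{id,c\}$ if $B=2$, and let $T$ be the unique nonempty compact set with $g(T)=\bigcup_{\delta\in\mathcal{D}}\delta(T)$. Let $T^{\ell}$ be the unique nonempty compact set with $MT^{\ell}=\bigcup_{k=0}^{B-1}\left(T^{\ell}+(k,0)^T\right)$. The neighbor set of $T$ is $\mathcal{S}=\{\gamma\in\Gamma\setminus\{id\}: T\cap\gamma(T)\neq\emptyset\}$; the neighbor set of $T^{\ell}$ is $\mathcal{S}^{\ell}=\{a^pb^q\neq id: T^{\ell}\cap a^pb^q(T^{\ell})\neq\emptyset\}$. *)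

theory Defs
  imports "HOL-Analysis.Analysis"
begin

text \<open>Elements of Gamma: a^p b^q c^r is encoded by the triple (p, q, r) with r :: bool
  (r = True meaning c^1).\<close>

type_synonym gam = "int \<times> int \<times> bool"

definition gmap :: "gam \<Rightarrow> real \<times> real \<Rightarrow> real \<times> real" where
  "gmap \<gamma> v = (case \<gamma> of (p, q, r) \<Rightarrow>
     (if r then - v else v) + (of_int p, of_int q))"

definition gid :: gam where "gid = (0, 0, False)"
definition gc :: gam where "gc = (0, 0, True)"

definition Mmap :: "int \<Rightarrow> int \<Rightarrow> real \<times> real \<Rightarrow> real \<times> real" where
  "Mmap A B v = (0 * fst v - of_int B * snd v, 1 * fst v - of_int A * snd v)"

definition gfun :: "int \<Rightarrow> int \<Rightarrow> real \<times> real \<Rightarrow> real \<times> real" where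
  "gfun A B v = Mmap A B v + ((of_int B - 1) / 2, 0)"

definition Dset :: "int \<Rightarrow> gam set" where
  "Dset B = (if B \<ge> 3 then {(k, 0, False) | k. 0 \<le> k \<and> k \<le> B - 2} \<union> {gc}
             else {gid, gc})"

definition is_T :: "int \<Rightarrow> int \<Rightarrow> (real \<times> real) set \<Rightarrow> bool" where
  "is_T A B T \<longleftrightarrow> T \<noteq> {} \<and> compact T \<and>
     gfun A B ` T = (\<Union>\<delta>\<in>Dset B. gmap \<delta> ` T)"

definition is_Tl :: "int \<Rightarrow> int \<Rightarrow> (real \<times> real) set \<Rightarrow> bool" where
  "is_Tl A B Tl \<longleftrightarrow> Tl \<noteq> {} \<and> compact Tl \<and>
     Mmap A B ` Tl = (\<Union>k\<in>{0..B-1}. (\<lambda>v. v + (of_int k, 0)) ` Tl)"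

definition nbr :: "(real \<times> real) set \<Rightarrow> gam set" where
  "nbr T = {\<gamma>. \<gamma> \<noteq> gid \<and> T \<inter> gmap \<gamma> ` T \<noteq> {}}"

definition nbr_l :: "(real \<times> real) set \<Rightarrow> gam set" where
  "nbr_l T = {(p, q, False) | p q. (p, q, False) \<noteq> gid \<and>
                T \<inter> gmap (p, q, False) ` T \<noteq> {}}"

definition comp_c :: "gam \<Rightarrow> gam" where
  "comp_c \<gamma> = (case \<gamma> of (p, q, r) \<Rightarrow> (p, q, \<not> r))"

definition Sprime :: "(real \<times> real) set \<Rightarrow> gam set" where
  "Sprime Tl = nbr_l Tl \<union> {gc} \<union> comp_c ` nbr_l Tl"

end

theory Submission
  imports Defs
begin

definition gcomp :: "gam \<Rightarrow> gam \<Rightarrow> gam" where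
  "gcomp g h = (case g of (p1,q1,r1) \<Rightarrow> case h of (p2,q2,r2) \<Rightarrow>
     ((if r1 then - p2 else p2) + p1, (if r1 then - q2 else q2) + q1, r1 \<noteq> r2))"

definition ginv :: "gam \<Rightarrow> gam" where
  "ginv g = (case g of (p,q,r) \<Rightarrow> (if r then p else - p, if r then q else - q, r))"

definition phi :: "int \<Rightarrow> int \<Rightarrow> gam \<Rightarrow> gam" where
  "phi A B g = (case g of (p,q,r) \<Rightarrow> (- B * q + (if r then B - 1 else 0), p - A * q, r))"

definition sg :: "int \<Rightarrow> int \<Rightarrow> gam \<Rightarrow> gam \<Rightarrow> gam \<Rightarrow> gam" where
  "sg A B g d d' = gcomp (gcomp (ginv d) (phi A B g)) d'"

lemma gmap_comp: "gmap (gcomp g h) v = gmap g (gmap h v)"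
  by (cases g; cases h; cases v) (auto simp: gmap_def gcomp_def)

lemma gmap_inv: "gmap (ginv g) (gmap g v) = v"
  by (cases g; cases v) (auto simp: gmap_def ginv_def zero_prod_def)

lemma gfun_gmap: "gfun A B (gmap g x) = gmap (phi A B g) (gfun A B x)"
  by (cases g; cases x) (auto simp: gmap_def gfun_def phi_def Mmap_def algebra_simps)

lemma key_conj:
  assumes "gfun A B x' = gmap d' b"
  shows "gfun A B (gmap g x') = gmap d (gmap (sg A B g d d') b)"
proof -
  have "gmap d (gmap (sg A B g d d') b) = gmap d (gmap (ginv d) (gmap (phi A B g) (gmap d' b)))"
    by (simp add: sg_def gmap_comp)
  also have "\<dots> = gmap (phi A B g) (gmap d' b)"
    by (cases d; cases b) (auto simp: gmap_def ginv_def zero_prod_def)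
  finally show ?thesis using assms gfun_gmap by simp
qed

lemma gfun_diff: "gfun A B a - gfun A B b = Mmap A B (a - b)"
  by (cases a; cases b) (simp add: gfun_def Mmap_def algebra_simps)

lemma gmap_diff: "gmap d a - gmap d b = (if snd (snd d) then -(a - b) else a - b)"
  by (cases d) (auto simp: gmap_def)

lemma gmap_inj: "gmap d a = gmap d b \<Longrightarrow> a = b"
  using gmap_diff[of d a b] by (auto split: if_splits)

definition NN :: "int \<Rightarrow> int \<Rightarrow> real \<times> real \<Rightarrow> real" where
  "NN A B v = (if \<bar>A\<bar> \<le> B - 2 then (fst v)^2 + of_int B * (snd v)^2
               else (fst v)^2 - of_int A * fst v * snd v + of_int B * (snd v)^2)"

definition rho :: "int \<Rightarrow> int \<Rightarrow> real" where
  "rho A B = (if \<bar>A\<bar> \<le> B - 2 then (of_int B - 1) / of_int B else 1 / of_int B)"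

lemma case2_disc:
  fixes A B :: int
  assumes "-1 \<le> A" "A \<le> B" "B \<ge> 2" "2 * A < B + 3" "\<not> \<bar>A\<bar> \<le> B - 2"
  shows "A^2 < 4 * B"
proof -
  have "B \<le> 4" "A \<le> 3" using assms by auto
  then have "A \<in> {-1,0,1,2,3}" "B \<in> {2,3,4}" using assms by auto
  thus ?thesis using assms by auto
qed

lemma NN_props:
  fixes A B :: int
  assumes "-1 \<le> A" "A \<le> B" "B \<ge> 2" "2 * A < B + 3"
  shows "0 \<le> rho A B" "rho A B < 1" "continuous_on UNIV (NN A B)"
    "\<And>w. 0 \<le> NN A B w" "\<And>w. NN A B w = 0 \<Longrightarrow> w = 0" "\<And>w. NN A B (-w) = NN A B w"
    "\<And>w. NN A B w \<le> rho A B * NN A B (Mmap A B w)"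
proof -
  have B2: "(2::real) \<le> of_int B" using assms by simp
  show "0 \<le> rho A B" using B2 by (simp add: rho_def)
  show "rho A B < 1" using B2 by (simp add: rho_def divide_less_eq)
  show "continuous_on UNIV (NN A B)"
    unfolding NN_def by (cases "\<bar>A\<bar> \<le> B - 2") (simp_all add: continuous_intros)
  show "NN A B (-w) = NN A B w" for w by (simp add: NN_def)
  show "0 \<le> NN A B w" for w
  proof (cases "\<bar>A\<bar> \<le> B - 2")
    case True thus ?thesis using B2 by (simp add: NN_def)
  next
    case False
    have d: "of_int (A^2) < (4 * of_int B :: real)" using case2_disc[OF assms False] by linarith
    have "4 * NN A B w = (2 * fst w - of_int A * snd w)^2 + (4 * of_int B - of_int (A^2)) * (snd w)^2"
      using False by (simp add: NN_def power2_eq_square algebra_simps)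
    also have "\<dots> \<ge> 0" using d by (intro add_nonneg_nonneg) auto
    finally show ?thesis by simp
  qed
  show "w = 0" if "NN A B w = 0" for w
  proof (cases "\<bar>A\<bar> \<le> B - 2")
    case True
    hence "(fst w)^2 + of_int B * (snd w)^2 = 0" using that by (simp add: NN_def)
    hence "fst w = 0" "snd w = 0" using B2
      by (smt (verit) mult_nonneg_nonneg zero_le_power2 power_eq_0_iff mult_eq_0_iff)+
    thus ?thesis by (simp add: prod_eq_iff)
  next
    case False
    have d: "of_int (A^2) < (4 * of_int B :: real)" using case2_disc[OF assms False] by linarith
    have "4 * NN A B w = (2 * fst w - of_int A * snd w)^2 + (4 * of_int B - of_int (A^2)) * (snd w)^2"
      using False by (simp add: NN_def power2_eq_square algebra_simps)
    hence e: "(2 * fst w - of_int A * snd w)^2 + (4 * of_int B - of_int (A^2)) * (snd w)^2 = 0"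
      using that by simp
    have p: "(4 * of_int B - of_int (A^2)) * (snd w)^2 \<ge> 0" using d by auto
    have "(4 * of_int B - of_int (A^2)) * (snd w)^2 = 0" using e p
      by (smt (verit) zero_le_power2)
    hence s: "snd w = 0" using d by simp
    hence "(2 * fst w)^2 = 0" using e by simp
    hence "fst w = 0" by simp
    thus ?thesis using s by (simp add: prod_eq_iff)
  qed
  show "NN A B w \<le> rho A B * NN A B (Mmap A B w)" for w
  proof (cases "\<bar>A\<bar> \<le> B - 2")
    case False
    have "NN A B (Mmap A B w) = of_int B * NN A B w"
      using False by (simp add: NN_def Mmap_def power2_eq_square algebra_simps)
    thus ?thesis using False B2 by (simp add: rho_def)
  next
    case True
    obtain x y where w: "w = (x,y)" by (cases w)
    define b :: real where "b = of_int B"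
    define a :: real where "a = of_int A"
    define u where "u = x - a * y"
    have b2: "b \<ge> 2" using B2 by (simp add: b_def)
    have "\<bar>A\<bar> \<le> \<bar>B - 2\<bar>" using True by simp
    hence "A^2 \<le> (B-2)^2" by (simp only: abs_le_square_iff)
    hence "real_of_int (A^2) \<le> real_of_int ((B-2)^2)" by (simp only: of_int_le_iff)
    hence a2: "a^2 \<le> (b-2)^2" by (simp add: a_def b_def)
    define G where "G = (b-2)*u^2 - 2*a*u*y + (b*(b-2) - a^2)*y^2"
    have G: "G \<ge> 0"
    proof (cases "b = 2")
      case True
      hence "a^2 \<le> 0" using a2 by simp
      hence "a = 0" by simp
      thus ?thesis using True by (simp add: G_def)
    next
      case False
      hence bp: "b - 2 > 0" using b2 by simp
      have c: "b*(b-2)^2 - (b-1)*a^2 \<ge> 0"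
      proof -
        have "(b-1)*a^2 \<le> (b-1)*(b-2)^2" using a2 b2 by (intro mult_left_mono) auto
        also have "\<dots> \<le> b*(b-2)^2" by (intro mult_right_mono) auto
        finally show ?thesis by simp
      qed
      have "(b-2)*G = ((b-2)*u - a*y)^2 + (b*(b-2)^2 - (b-1)*a^2)*y^2"
        unfolding G_def by (simp add: power2_eq_square algebra_simps)
      also have "\<dots> \<ge> 0" using c by auto
      finally show ?thesis using bp by (simp add: zero_le_mult_iff)
    qed
    have e1: "NN A B w = (u + a*y)^2 + b*y^2" using True w by (simp add: NN_def u_def a_def b_def)
    have e2: "NN A B (Mmap A B w) = b^2*y^2 + b*u^2" using True w
      by (simp add: NN_def Mmap_def u_def a_def b_def power2_eq_square)
    have "b * NN A B w \<le> (b - 1) * NN A B (Mmap A B w)"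
    proof -
      have "(b-1) * NN A B (Mmap A B w) - b * NN A B w = b * G"
        unfolding e1 e2 G_def by (simp add: power2_eq_square algebra_simps)
      also have "\<dots> \<ge> 0" using G b2 by simp
      finally show ?thesis by simp
    qed
    hence "NN A B w \<le> (b - 1) * NN A B (Mmap A B w) / b" using b2 by (simp add: le_divide_eq mult.commute)
    thus ?thesis using True by (simp add: rho_def b_def)
  qed
qed

lemma zero_by_contraction:
  fixes d :: "'a \<Rightarrow> real"
  assumes "finite S" "\<And>s. s \<in> S \<Longrightarrow> d s \<ge> 0" "\<And>s. s \<in> S \<Longrightarrow> \<exists>s'\<in>S. d s \<le> \<rho> * d s'"
    "0 \<le> \<rho>" "\<rho> < 1"
  shows "\<And>s. s \<in> S \<Longrightarrow> d s = 0"
proof -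
  fix s assume sS: "s \<in> S"
  define D where "D = Max (d ` S)"
  have le: "d t \<le> D" if "t \<in> S" for t using assms(1) that unfolding D_def by simp
  obtain s0 where s0: "s0 \<in> S" "D = d s0"
    using assms(1) sS unfolding D_def by (metis (mono_tags, lifting) Max_in empty_iff finite_imageI image_iff image_is_empty)
  obtain s' where s': "s' \<in> S" "d s0 \<le> \<rho> * d s'" using assms(3) s0(1) by blast
  have "\<rho> * d s' \<le> \<rho> * D" using le[OF s'(1)] assms(4) by (simp add: mult_left_mono)
  hence "D \<le> \<rho> * D" using s' s0 by simp
  hence "D \<le> 0" using assms(5) by (smt (verit) mult_le_cancel_right1)
  thus "d s = 0" using le[OF sS] assms(2)[OF sS] by simp
qed

lemma abstract_lower:
  fixes K :: "(real \<times> real) set" and G :: "'a \<Rightarrow> real \<times> real \<Rightarrow> real \<times> real"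
    and N :: "real \<times> real \<Rightarrow> real"
  assumes K: "compact K" "K \<noteq> {}" and X: "finite X"
    and N: "continuous_on UNIV N" "\<And>w. 0 \<le> N w" "\<And>w. N w = 0 \<Longrightarrow> w = 0"
    and r: "0 \<le> \<rho>" "\<rho> < 1"
    and Gc: "\<And>i. i \<in> X \<Longrightarrow> continuous_on UNIV (G i)"
    and step: "\<And>i. i \<in> X \<Longrightarrow> \<exists>j\<in>X. \<forall>p q. p \<in> K \<longrightarrow> q \<in> K \<longrightarrow>
                  (\<exists>x\<in>K. \<exists>x'\<in>K. N (x - G i x') \<le> \<rho> * N (p - G j q))"
  shows "\<And>i. i \<in> X \<Longrightarrow> \<exists>q\<in>K. G i q \<in> K"
proof -
  define f where "f i = (\<lambda>pq. N (fst pq - G i (snd pq)))" for i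
  have ex: "\<exists>pq\<in>K \<times> K. \<forall>pq'\<in>K \<times> K. f i pq \<le> f i pq'" if "i \<in> X" for i
  proof (rule continuous_attains_inf)
    show "compact (K \<times> K)" using K by (simp add: compact_Times)
    show "K \<times> K \<noteq> {}" using K by simp
    have "continuous_on UNIV (\<lambda>pq. fst pq - G i (snd pq))"
      by (intro continuous_intros continuous_on_compose2[OF Gc[OF that]]) auto
    thus "continuous_on (K \<times> K) (f i)" unfolding f_def
      by (intro continuous_on_compose2[OF N(1)]) (auto intro: continuous_on_subset)
  qed
  define mp where "mp i = (SOME pq. pq \<in> K \<times> K \<and> (\<forall>pq'\<in>K \<times> K. f i pq \<le> f i pq'))" for i
  have mp: "mp i \<in> K \<times> K" "\<And>pq'. pq' \<in> K \<times> K \<Longrightarrow> f i (mp i) \<le> f i pq'" if "i \<in> X" for i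
    using someI_ex[OF ex[OF that, unfolded Bex_def]] unfolding mp_def by auto
  define d where "d i = f i (mp i)" for i
  have d0: "\<And>i. i \<in> X \<Longrightarrow> d i = 0"
  proof (rule zero_by_contraction[OF X _ _ r])
    show "0 \<le> d i" for i unfolding d_def f_def using N(2) by simp
    fix i assume i: "i \<in> X"
    obtain j where j: "j \<in> X" and st: "\<forall>p q. p \<in> K \<longrightarrow> q \<in> K \<longrightarrow>
                  (\<exists>x\<in>K. \<exists>x'\<in>K. N (x - G i x') \<le> \<rho> * N (p - G j q))" using step[OF i] by blast
    obtain p q where pq: "mp j = (p,q)" by (cases "mp j")
    have "p \<in> K" "q \<in> K" using mp(1)[OF j] pq by auto
    then obtain x x' where x: "x \<in> K" "x' \<in> K" "N (x - G i x') \<le> \<rho> * N (p - G j q)" using st by blast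
    have "d i \<le> f i (x, x')" unfolding d_def using mp(2)[OF i] x by auto
    also have "\<dots> \<le> \<rho> * d j" using x(3) pq unfolding d_def f_def by simp
    finally show "\<exists>j\<in>X. d i \<le> \<rho> * d j" using j by blast
  qed
  fix i assume i: "i \<in> X"
  obtain p q where pq: "mp i = (p,q)" by (cases "mp i")
  have "N (p - G i q) = 0" using d0[OF i] pq unfolding d_def f_def by simp
  hence "p = G i q" using N(3) by fastforce
  thus "\<exists>q\<in>K. G i q \<in> K" using mp(1)[OF i] pq by auto
qed

lemma T_fwd: "is_T A B T \<Longrightarrow> d \<in> Dset B \<Longrightarrow> y \<in> T \<Longrightarrow> \<exists>x\<in>T. gfun A B x = gmap d y"
  unfolding is_T_def by (metis (no_types, lifting) UN_iff image_eqI imageE)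

lemma T_bwd: "is_T A B T \<Longrightarrow> x \<in> T \<Longrightarrow> \<exists>d\<in>Dset B. \<exists>y\<in>T. gfun A B x = gmap d y"
  unfolding is_T_def by (metis (no_types, lifting) UN_iff image_eqI imageE)

lemma Tl_fwd: "is_Tl A B Tl \<Longrightarrow> 0 \<le> k \<Longrightarrow> k \<le> B - 1 \<Longrightarrow> y \<in> Tl \<Longrightarrow>
    \<exists>x\<in>Tl. Mmap A B x = y + (of_int k, 0)"
proof -
  assume h: "is_Tl A B Tl" "0 \<le> k" "k \<le> B - 1" "y \<in> Tl"
  have "y + (of_int k, 0) \<in> (\<Union>k\<in>{0..B-1}. (\<lambda>v. v + (of_int k, 0)) ` Tl)" using h by auto
  hence "y + (of_int k, 0) \<in> Mmap A B ` Tl" using h(1) unfolding is_Tl_def by simp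
  thus ?thesis by (metis imageE)
qed

lemma Tl_bwd: "is_Tl A B Tl \<Longrightarrow> x \<in> Tl \<Longrightarrow>
    \<exists>k. 0 \<le> k \<and> k \<le> B - 1 \<and> (\<exists>y\<in>Tl. Mmap A B x = y + (of_int k, 0))"
proof -
  assume h: "is_Tl A B Tl" "x \<in> Tl"
  have "Mmap A B x \<in> (\<Union>k\<in>{0..B-1}. (\<lambda>v. v + (of_int k, 0)) ` Tl)"
    using h unfolding is_Tl_def by blast
  thus ?thesis by auto
qed

lemma gmap_cont: "continuous_on UNIV (gmap g)"
proof -
  obtain p q r where g: "g = (p,q,r)" by (cases g)
  show ?thesis unfolding g gmap_def by (cases r) (simp_all add: continuous_intros)
qed

lemma Mmap_diff: "Mmap A B (a - b) = Mmap A B a - Mmap A B b"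
  by (simp add: Mmap_def algebra_simps)

lemma T_lower:
  assumes prm: "-1 \<le> A" "A \<le> B" "B \<ge> 2" "2 * A < B + 3" and T: "is_T A B T"
    and X: "finite X"
    and cl: "\<And>g. g \<in> X \<Longrightarrow> \<exists>d\<in>Dset B. \<exists>d'\<in>Dset B. sg A B g d d' \<in> X"
    and g: "g \<in> X"
  shows "T \<inter> gmap g ` T \<noteq> {}"
proof -
  note NP = NN_props[OF prm]
  have Tc: "compact T" "T \<noteq> {}" using T unfolding is_T_def by auto
  have "\<exists>q\<in>T. gmap g q \<in> T"
  proof (rule abstract_lower[OF Tc X NP(3) NP(4) NP(5) NP(1) NP(2) gmap_cont _ g])
    fix i assume i: "i \<in> X"
    obtain d d' where dd: "d \<in> Dset B" "d' \<in> Dset B" "sg A B i d d' \<in> X" using cl[OF i] by blast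
    show "\<exists>j\<in>X. \<forall>p q. p \<in> T \<longrightarrow> q \<in> T \<longrightarrow>
             (\<exists>x\<in>T. \<exists>x'\<in>T. NN A B (x - gmap i x') \<le> rho A B * NN A B (p - gmap j q))"
    proof (intro bexI[OF _ dd(3)] allI impI)
      fix p q assume pq: "p \<in> T" "q \<in> T"
      obtain x where x: "x \<in> T" "gfun A B x = gmap d p" using T_fwd[OF T dd(1) pq(1)] by blast
      obtain x' where x': "x' \<in> T" "gfun A B x' = gmap d' q" using T_fwd[OF T dd(2) pq(2)] by blast
      have kc: "gfun A B (gmap i x') = gmap d (gmap (sg A B i d d') q)" using key_conj[OF x'(2)] .
      have "Mmap A B (x - gmap i x') = gmap d p - gmap d (gmap (sg A B i d d') q)"
        using gfun_diff[of A B x "gmap i x'"] x(2) kc by simp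
      hence "NN A B (Mmap A B (x - gmap i x')) = NN A B (p - gmap (sg A B i d d') q)"
        using gmap_diff[of d p "gmap (sg A B i d d') q"] NP(6)[of "p - gmap (sg A B i d d') q"]
        by (simp split: if_splits)
      hence "NN A B (x - gmap i x') \<le> rho A B * NN A B (p - gmap (sg A B i d d') q)"
        using NP(7)[of "x - gmap i x'"] by simp
      thus "\<exists>x\<in>T. \<exists>x'\<in>T. NN A B (x - gmap i x') \<le> rho A B * NN A B (p - gmap (sg A B i d d') q)"
        using x x' by blast
    qed
  qed
  thus ?thesis by blast
qed

definition lsucc :: "int \<Rightarrow> int \<Rightarrow> int \<times> int \<Rightarrow> int \<Rightarrow> int \<Rightarrow> int \<times> int" where
  "lsucc A B v k k' = (- B * snd v + k' - k, fst v - A * snd v)"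

definition tr :: "int \<times> int \<Rightarrow> real \<times> real" where
  "tr v = (of_int (fst v), of_int (snd v))"

lemma Mmap_tr: "Mmap A B (tr v) + (of_int k', 0) - (of_int k, 0) = tr (lsucc A B v k k')"
  by (simp add: Mmap_def tr_def lsucc_def)

lemma Tl_lower:
  assumes prm: "-1 \<le> A" "A \<le> B" "B \<ge> 2" "2 * A < B + 3" and Tl: "is_Tl A B Tl"
    and X: "finite X"
    and cl: "\<And>v. v \<in> X \<Longrightarrow> \<exists>k k'. 0 \<le> k \<and> k \<le> B - 1 \<and> 0 \<le> k' \<and> k' \<le> B - 1 \<and> lsucc A B v k k' \<in> X"
    and v: "v \<in> X"
  shows "\<exists>q\<in>Tl. q + tr v \<in> Tl"
proof -
  note NP = NN_props[OF prm]
  have Tc: "compact Tl" "Tl \<noteq> {}" using Tl unfolding is_Tl_def by auto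
  show ?thesis
  proof (rule abstract_lower[where G="\<lambda>v q. q + tr v", OF Tc X NP(3) NP(4) NP(5) NP(1) NP(2)])
    show "v \<in> X" by (rule v)
    show "continuous_on UNIV (\<lambda>q. q + tr i)" for i by (simp add: continuous_intros)
    fix i assume i: "i \<in> X"
    obtain k k' where kk: "0 \<le> k" "k \<le> B - 1" "0 \<le> k'" "k' \<le> B - 1" "lsucc A B i k k' \<in> X"
      using cl[OF i] by blast
    show "\<exists>j\<in>X. \<forall>p q. p \<in> Tl \<longrightarrow> q \<in> Tl \<longrightarrow>
             (\<exists>x\<in>Tl. \<exists>x'\<in>Tl. NN A B (x - (x' + tr i)) \<le> rho A B * NN A B (p - (q + tr j)))"
    proof (intro bexI[OF _ kk(5)] allI impI)
      fix p q assume pq: "p \<in> Tl" "q \<in> Tl"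
      obtain x where x: "x \<in> Tl" "Mmap A B x = p + (of_int k, 0)" using Tl_fwd[OF Tl kk(1,2) pq(1)] by blast
      obtain x' where x': "x' \<in> Tl" "Mmap A B x' = q + (of_int k', 0)" using Tl_fwd[OF Tl kk(3,4) pq(2)] by blast
      have "Mmap A B (x - (x' + tr i)) = Mmap A B x - Mmap A B x' - Mmap A B (tr i)"
        by (simp add: Mmap_def algebra_simps)
      also have "\<dots> = p - (q + (Mmap A B (tr i) + (of_int k', 0) - (of_int k, 0)))"
        using x(2) x'(2) by (simp add: algebra_simps)
      also have "\<dots> = p - (q + tr (lsucc A B i k k'))" by (simp only: Mmap_tr)
      finally have "Mmap A B (x - (x' + tr i)) = p - (q + tr (lsucc A B i k k'))" .
      hence "NN A B (x - (x' + tr i)) \<le> rho A B * NN A B (p - (q + tr (lsucc A B i k k')))"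
        using NP(7)[of "x - (x' + tr i)"] by simp
      thus "\<exists>x\<in>Tl. \<exists>x'\<in>Tl. NN A B (x - (x' + tr i)) \<le> rho A B * NN A B (p - (q + tr (lsucc A B i k k')))"
        using x x' by blast
    qed
  qed
qed

lemma Kgen:
  fixes A B m y' y'' j :: int
  assumes "1 \<le> A" "A \<le> B - 2" "m \<ge> 2" "\<bar>y'\<bar> \<le> m" "\<bar>y''\<bar> \<le> m"
    "y'' + A * y' + B * m = j" "\<bar>j\<bar> \<le> B - 1"
  shows "y' = - m"
proof (rule ccontr)
  assume "y' \<noteq> - m"
  hence h: "y' \<ge> -(m-1)" using assms(4) by auto
  have "A * y' \<ge> A * (-(m-1))" using h assms(1) by (intro mult_left_mono) auto
  moreover have "(B-1-A)*(m-1) \<ge> 1*1" using assms by (intro mult_mono) auto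
  ultimately show False using assms by (simp add: algebra_simps)
qed

lemma seq_general:
  fixes A B m y1 y2 y3 j0 j1 :: int
  assumes "1 \<le> A" "A \<le> B - 2" "2 * A < B + 3" "m \<ge> 2"
    "\<bar>y1\<bar> \<le> m" "\<bar>y2\<bar> \<le> m" "\<bar>y3\<bar> \<le> m"
    "y2 + A * y1 + B * m = j0" "\<bar>j0\<bar> \<le> B - 1"
    "y3 + A * y2 + B * y1 = j1" "\<bar>j1\<bar> \<le> B - 1"
  shows False
proof -
  have a: "y1 = -m" using Kgen[OF assms(1,2,4,5,6,8,9)] .
  have "-y2 = -m"
    using Kgen[OF assms(1,2,4), of "-y2" "-y3" "-j1"] assms a by (simp add: algebra_simps)
  hence b: "y2 = m" by simp
  have e: "m * (B - A + 1) \<le> B - 1" using assms(8,9) a b by (simp add: algebra_simps)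
  have "2 * (B - A + 1) \<le> m * (B - A + 1)" using assms by (intro mult_right_mono) auto
  hence "2 * (B - A + 1) \<le> B - 1" using e by (rule order_trans)
  hence "B + 3 \<le> 2 * A" by (simp add: algebra_simps)
  thus False using assms(3) by simp
qed

lemma seq_A0:
  fixes A B m y1 y2 j0 :: int
  assumes "A = 0" "B \<ge> 2" "m \<ge> 2" "\<bar>y2\<bar> \<le> m" "y2 + A * y1 + B * m = j0" "\<bar>j0\<bar> \<le> B - 1"
  shows False
proof -
  have "(B-1)*(m-1) \<ge> 1*1" using assms by (intro mult_mono) auto
  thus False using assms by (simp add: algebra_simps)
qed

lemma seq_Am1:
  fixes A B m y1 y2 j0 :: int
  assumes "A = -1" "B \<ge> 4" "m \<ge> 2" "\<bar>y1\<bar> \<le> m" "\<bar>y2\<bar> \<le> m" "y2 + A * y1 + B * m = j0" "\<bar>j0\<bar> \<le> B - 1"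
  shows False
proof -
  have "(B-2)*(m-1) \<ge> 2*1" using assms by (intro mult_mono) auto
  thus False using assms by (simp add: algebra_simps)
qed

lemma seq_special:
  fixes A B m y1 y2 y3 y4 j0 j1 j2 :: int
  assumes "(A,B) \<in> {(-1,2),(-1,3),(1,2),(2,2),(2,3),(3,4)}" "m \<ge> 2"
    "\<bar>y1\<bar> \<le> m" "\<bar>y2\<bar> \<le> m" "\<bar>y3\<bar> \<le> m" "\<bar>y4\<bar> \<le> m"
    "y2 + A * y1 + B * m = j0" "\<bar>j0\<bar> \<le> B - 1"
    "y3 + A * y2 + B * y1 = j1" "\<bar>j1\<bar> \<le> B - 1"
    "y4 + A * y3 + B * y2 = j2" "\<bar>j2\<bar> \<le> B - 1"
  shows False
  using assms by (auto simp: abs_le_iff)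

lemma seq_all:
  fixes A B m y1 y2 y3 y4 j0 j1 j2 :: int
  assumes prm: "-1 \<le> A" "A \<le> B" "B \<ge> 2" "2 * A < B + 3" and m: "m \<ge> 2"
    "\<bar>y1\<bar> \<le> m" "\<bar>y2\<bar> \<le> m" "\<bar>y3\<bar> \<le> m" "\<bar>y4\<bar> \<le> m"
    "y2 + A * y1 + B * m = j0" "\<bar>j0\<bar> \<le> B - 1"
    "y3 + A * y2 + B * y1 = j1" "\<bar>j1\<bar> \<le> B - 1"
    "y4 + A * y3 + B * y2 = j2" "\<bar>j2\<bar> \<le> B - 1"
  shows False
proof -
  consider "A = 0" | "A = -1" "B \<ge> 4" | "1 \<le> A" "A \<le> B - 2"
    | "(A,B) \<in> {(-1,2),(-1,3),(1,2),(2,2),(2,3),(3,4)}"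
  proof (cases "A = 0 \<or> (A = -1 \<and> B \<ge> 4) \<or> (1 \<le> A \<and> A \<le> B - 2)")
    case True thus ?thesis using that by blast
  next
    case False
    hence "A = -1 \<and> (B = 2 \<or> B = 3) \<or> (A = B - 1 \<or> A = B) \<and> A \<ge> 1" using prm by auto
    hence "(A,B) \<in> {(-1,2),(-1,3),(1,2),(2,2),(2,3),(3,4)}" using prm by auto
    thus ?thesis using that by blast
  qed
  thus False
  proof cases
    case 1 thus False using seq_A0[OF 1 prm(3) m(1,3,6,7)] by blast
  next
    case 2 thus False using seq_Am1[OF 2 m(1,2,3,6,7)] by blast
  next
    case 3 thus False using seq_general[OF 3 prm(4) m(1,2,3,4,6,7,8,9)] by blast
  next
    case 4 thus False using seq_special[OF 4 m] by blast
  qed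
qed

definition UU :: "(real \<times> real) set \<Rightarrow> (real \<times> real) set" where
  "UU T = T \<union> uminus ` T"

definition Yu :: "(real \<times> real) set \<Rightarrow> (int \<times> int) set" where
  "Yu T = {v. \<exists>p\<in>UU T. p - tr v \<in> UU T}"

lemma gfun_neg: "gfun A B (- p) = - gfun A B p + (of_int B - 1, 0)"
  by (cases p) (simp add: gfun_def Mmap_def field_simps)

lemma Dset_cases: "d \<in> Dset B \<Longrightarrow> B \<ge> 2 \<Longrightarrow> d = gc \<or> (\<exists>k. 0 \<le> k \<and> k \<le> B - 2 \<and> d = (k, 0, False))"
  unfolding Dset_def gid_def by (auto split: if_splits)

lemma U_step:
  assumes T: "is_T A B T" and B: "B \<ge> 2" and p: "p \<in> UU T"
  shows "\<exists>a\<in>UU T. \<exists>k. 0 \<le> k \<and> k \<le> B - 1 \<and> gfun A B p = a + (of_int k, 0)"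
proof -
  have c1: ?thesis if p0: "p \<in> T"
  proof -
    obtain d y where dy: "d \<in> Dset B" "y \<in> T" "gfun A B p = gmap d y" using T_bwd[OF T p0] by blast
    from Dset_cases[OF dy(1) B] show ?thesis
    proof
      assume "d = gc"
      hence "gfun A B p = (-y) + (of_int 0, 0)" using dy by (simp add: gmap_def gc_def)
      moreover have "-y \<in> UU T" using dy(2) by (simp add: UU_def)
      ultimately show ?thesis using B by (intro bexI[of _ "-y"] exI[of _ 0]) auto
    next
      assume "\<exists>k. 0 \<le> k \<and> k \<le> B - 2 \<and> d = (k, 0, False)"
      then obtain k where k: "0 \<le> k" "k \<le> B - 2" "d = (k,0,False)" by blast
      hence "gfun A B p = y + (of_int k, 0)" using dy by (simp add: gmap_def add.commute)
      moreover have "y \<in> UU T" using dy(2) by (simp add: UU_def)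
      ultimately show ?thesis using k by (intro bexI[of _ y] exI[of _ k]) auto
    qed
  qed
  have c2: ?thesis if p0: "-p \<in> T"
  proof -
    obtain d y where dy: "d \<in> Dset B" "y \<in> T" "gfun A B (-p) = gmap d y" using T_bwd[OF T p0] by blast
    have gp: "gfun A B p = - gmap d y + (of_int B - 1, 0)" using gfun_neg[of A B "-p"] dy(3) by simp
    from Dset_cases[OF dy(1) B] show ?thesis
    proof
      assume "d = gc"
      hence "gfun A B p = y + (of_int (B - 1), 0)" using gp by (simp add: gmap_def gc_def zero_prod_def)
      moreover have "y \<in> UU T" using dy(2) by (simp add: UU_def)
      ultimately show ?thesis using B by (intro bexI[of _ y] exI[of _ "B - 1"]) auto
    next
      assume "\<exists>k. 0 \<le> k \<and> k \<le> B - 2 \<and> d = (k, 0, False)"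
      then obtain k where k: "0 \<le> k" "k \<le> B - 2" "d = (k,0,False)" by blast
      hence "gfun A B p = (-y) + (of_int (B - 1 - k), 0)" using gp by (simp add: gmap_def)
      moreover have "-y \<in> UU T" using dy(2) by (simp add: UU_def)
      ultimately show ?thesis using k by (intro bexI[of _ "-y"] exI[of _ "B - 1 - k"]) auto
    qed
  qed
  from p have "p \<in> T \<or> -p \<in> T" unfolding UU_def by (auto simp: image_iff)
  thus ?thesis using c1 c2 by blast
qed

lemma Yu_succ:
  assumes T: "is_T A B T" and B: "B \<ge> 2" and v: "v \<in> Yu T"
  shows "\<exists>k k'. 0 \<le> k \<and> k \<le> B - 1 \<and> 0 \<le> k' \<and> k' \<le> B - 1 \<and> lsucc A B v k k' \<in> Yu T"
proof -
  obtain p where p: "p \<in> UU T" "p - tr v \<in> UU T" using v unfolding Yu_def by blast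
  obtain a k where a: "a \<in> UU T" "0 \<le> k" "k \<le> B - 1" "gfun A B p = a + (of_int k, 0)"
    using U_step[OF T B p(1)] by blast
  obtain b k' where b: "b \<in> UU T" "0 \<le> k'" "k' \<le> B - 1" "gfun A B (p - tr v) = b + (of_int k', 0)"
    using U_step[OF T B p(2)] by blast
  have "Mmap A B (tr v) = gfun A B p - gfun A B (p - tr v)" using gfun_diff[of A B p "p - tr v"] by simp
  hence e1: "Mmap A B (tr v) = (a + (of_int k, 0)) - (b + (of_int k', 0))" using a(4) b(4) by simp
  have "tr (lsucc A B v k k') = Mmap A B (tr v) + (of_int k', 0) - (of_int k, 0)"
    using Mmap_tr[of A B v k' k] by simp
  also have "\<dots> = a - b" unfolding e1 by (simp add: algebra_simps)
  finally have "a - tr (lsucc A B v k k') = b" by simp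
  hence "lsucc A B v k k' \<in> Yu T" using a(1) b(1) unfolding Yu_def by auto
  thus ?thesis using a b by blast
qed

lemma Yu_neg: "v \<in> Yu T \<Longrightarrow> - v \<in> Yu T"
proof -
  assume "v \<in> Yu T"
  then obtain p where p: "p \<in> UU T" "p - tr v \<in> UU T" unfolding Yu_def by blast
  have "tr (- v) = - tr v" by (simp add: tr_def)
  hence "(p - tr v) - tr (-v) = p" by simp
  thus "- v \<in> Yu T" using p unfolding Yu_def by (metis (mono_tags, lifting) mem_Collect_eq)
qed

lemma Yu_0: "T \<noteq> {} \<Longrightarrow> (0,0) \<in> Yu T"
proof -
  assume "T \<noteq> {}"
  then obtain p where "p \<in> T" by blast
  moreover have "tr (0,0) = 0" by (simp add: tr_def zero_prod_def)
  ultimately show ?thesis unfolding Yu_def UU_def by (intro CollectI bexI[of _ p]) auto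
qed

lemma Yu_finite:
  assumes "compact T" shows "finite (Yu T)"
proof -
  have "compact (UU T)" unfolding UU_def using assms
    by (intro compact_Un compact_continuous_image) (auto intro: continuous_intros)
  then obtain R where R: "\<And>p. p \<in> UU T \<Longrightarrow> norm p \<le> R"
    using compact_imp_bounded bounded_iff by metis
  define n where "n = ceiling (2 * R)"
  have "Yu T \<subseteq> {-n..n} \<times> {-n..n}"
  proof
    fix v assume "v \<in> Yu T"
    then obtain p where p: "p \<in> UU T" "p - tr v \<in> UU T" unfolding Yu_def by blast
    have "norm (tr v) = norm (p - (p - tr v))" by simp
    also have "\<dots> \<le> norm p + norm (p - tr v)" by (rule norm_triangle_ineq4)
    also have "\<dots> \<le> 2 * R" using R[OF p(1)] R[OF p(2)] by simp
    finally have nt: "norm (tr v) \<le> 2 * R" .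
    have "\<bar>of_int (fst v)\<bar> \<le> norm (tr v)" "\<bar>of_int (snd v)\<bar> \<le> norm (tr v)"
      unfolding tr_def using norm_fst_le norm_snd_le by (metis real_norm_def)+
    hence "\<bar>real_of_int (fst v)\<bar> \<le> 2 * R" "\<bar>real_of_int (snd v)\<bar> \<le> 2 * R" using nt by linarith+
    hence "\<bar>fst v\<bar> \<le> n" "\<bar>snd v\<bar> \<le> n" unfolding n_def by (simp_all add: le_ceiling_iff)
    thus "v \<in> {-n..n} \<times> {-n..n}" by (cases v) auto
  qed
  thus ?thesis by (rule finite_subset) simp
qed

lemma lsucc_simps: "fst (lsucc A B v k k') = - B * snd v + k' - k" "snd (lsucc A B v k k') = fst v - A * snd v"
  by (simp_all add: lsucc_def)

lemma Yu_bound: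
  assumes prm: "-1 \<le> A" "A \<le> B" "B \<ge> 2" "2 * A < B + 3" and T: "is_T A B T"
  shows "\<And>v. v \<in> Yu T \<Longrightarrow> \<bar>snd v\<bar> \<le> 1"
proof -
  have Tc: "compact T" "T \<noteq> {}" using T unfolding is_T_def by auto
  have fin: "finite (Yu T)" using Yu_finite[OF Tc(1)] .
  have ne: "Yu T \<noteq> {}" using Yu_0[OF Tc(2)] by blast
  define m where "m = Max ((\<lambda>v. \<bar>snd v\<bar>) ` Yu T)"
  have le: "\<bar>snd v\<bar> \<le> m" if "v \<in> Yu T" for v using fin that unfolding m_def by simp
  have "m \<in> (\<lambda>v. \<bar>snd v\<bar>) ` Yu T" unfolding m_def using fin ne by (intro Max_in) auto
  then obtain w where w: "w \<in> Yu T" "\<bar>snd w\<bar> = m" by auto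
  have succ: "\<exists>k k'. 0 \<le> k \<and> k \<le> B - 1 \<and> 0 \<le> k' \<and> k' \<le> B - 1 \<and> lsucc A B v k k' \<in> Yu T"
    if "v \<in> Yu T" for v using Yu_succ[OF T prm(3) that] .
  show "\<bar>snd v\<bar> \<le> 1" if v: "v \<in> Yu T" for v
  proof (rule ccontr)
    assume "\<not> \<bar>snd v\<bar> \<le> 1"
    hence m2: "m \<ge> 2" using le[OF v] by simp
    obtain v0 where v0: "v0 \<in> Yu T" "snd v0 = m"
    proof (cases "snd w = m")
      case True thus ?thesis using that w by blast
    next
      case False
      hence "snd w = - m" using w by auto
      thus ?thesis using that[of "-w"] Yu_neg[OF w(1)] by (cases w) auto
    qed
    obtain k0 k0' where s0: "0 \<le> k0" "k0 \<le> B - 1" "0 \<le> k0'" "k0' \<le> B - 1" "lsucc A B v0 k0 k0' \<in> Yu T"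
      using succ[OF v0(1)] by blast
    define v1 where "v1 = lsucc A B v0 k0 k0'"
    obtain k1 k1' where s1: "0 \<le> k1" "k1 \<le> B - 1" "0 \<le> k1'" "k1' \<le> B - 1" "lsucc A B v1 k1 k1' \<in> Yu T"
      using succ[OF s0(5)[folded v1_def]] by blast
    define v2 where "v2 = lsucc A B v1 k1 k1'"
    obtain k2 k2' where s2: "0 \<le> k2" "k2 \<le> B - 1" "0 \<le> k2'" "k2' \<le> B - 1" "lsucc A B v2 k2 k2' \<in> Yu T"
      using succ[OF s1(5)[folded v2_def]] by blast
    define v3 where "v3 = lsucc A B v2 k2 k2'"
    obtain k3 k3' where s3: "lsucc A B v3 k3 k3' \<in> Yu T"
      using succ[OF s2(5)[folded v3_def]] by blast
    define v4 where "v4 = lsucc A B v3 k3 k3'"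
    have y1: "\<bar>snd v1\<bar> \<le> m" using le s0(5) v1_def by simp
    have y2: "\<bar>snd v2\<bar> \<le> m" using le s1(5) v2_def by simp
    have y3: "\<bar>snd v3\<bar> \<le> m" using le s2(5) v3_def by simp
    have y4: "\<bar>snd v4\<bar> \<le> m" using le s3 v4_def by simp
    have e0: "snd v2 + A * snd v1 + B * m = k0' - k0"
      unfolding v2_def v1_def using v0(2) by (simp add: lsucc_simps algebra_simps)
    have e1: "snd v3 + A * snd v2 + B * snd v1 = k1' - k1"
      unfolding v3_def v2_def by (simp add: lsucc_simps algebra_simps)
    have e2: "snd v4 + A * snd v3 + B * snd v2 = k2' - k2"
      unfolding v4_def v3_def by (simp add: lsucc_simps algebra_simps)
    show False
      by (rule seq_all[OF prm m2 y1 y2 y3 y4 e0 _ e1 _ e2]) (use s0 s1 s2 in auto)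
  qed
qed

definition inE :: "int \<Rightarrow> int \<times> int \<Rightarrow> bool" where
  "inE A v = (\<bar>snd v\<bar> \<le> 1 \<and> \<bar>fst v - A * snd v\<bar> \<le> 1 \<and>
     (A \<ge> 1 \<longrightarrow> \<not> (snd v \<noteq> 0 \<and> fst v - A * snd v = snd v)) \<and>
     (A = -1 \<longrightarrow> \<not> (snd v \<noteq> 0 \<and> fst v - A * snd v = - snd v)))"

lemma Yu_inE:
  assumes prm: "-1 \<le> A" "A \<le> B" "B \<ge> 2" "2 * A < B + 3" and T: "is_T A B T"
    and v: "v \<in> Yu T"
  shows "inE A v"
proof -
  note bd = Yu_bound[OF prm T]
  have b2: "\<bar>fst u - A * snd u\<bar> \<le> 1" if u: "u \<in> Yu T" for u
  proof -
    obtain k k' where "lsucc A B u k k' \<in> Yu T" using Yu_succ[OF T prm(3) u] by blast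
    from bd[OF this] show ?thesis by (simp add: lsucc_simps)
  qed
  have ex1: "\<not> (snd u = 1 \<and> fst u - A * snd u = 1)" if u: "u \<in> Yu T" and A1: "A \<ge> 1" for u
  proof
    assume h: "snd u = 1 \<and> fst u - A * snd u = 1"
    obtain k k' where kk: "0 \<le> k" "k \<le> B - 1" "0 \<le> k'" "k' \<le> B - 1" "lsucc A B u k k' \<in> Yu T"
      using Yu_succ[OF T prm(3) u] by blast
    have "A * snd u = A" using h by simp
    hence "fst u = A + 1" using h by linarith
    with b2[OF kk(5)] h kk A1 show False by (simp add: lsucc_simps abs_le_iff)
  qed
  have ex2: "\<not> (snd u = 1 \<and> fst u - A * snd u = -1)" if u: "u \<in> Yu T" and A1: "A = -1" for u
  proof
    assume h: "snd u = 1 \<and> fst u - A * snd u = -1"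
    obtain k k' where kk: "0 \<le> k" "k \<le> B - 1" "0 \<le> k'" "k' \<le> B - 1" "lsucc A B u k k' \<in> Yu T"
      using Yu_succ[OF T prm(3) u] by blast
    have "A * snd u = -1" using h A1 by simp
    hence "fst u = -2" using h by linarith
    with b2[OF kk(5)] h kk A1 show False by (simp add: lsucc_simps abs_le_iff)
  qed
  have "-v \<in> Yu T" using Yu_neg[OF v] .
  have s: "\<bar>snd v\<bar> \<le> 1" using bd[OF v] .
  show ?thesis unfolding inE_def
  proof (intro conjI impI)
    show "\<bar>snd v\<bar> \<le> 1" by (rule s)
    show "\<bar>fst v - A * snd v\<bar> \<le> 1" by (rule b2[OF v])
    assume A1: "A \<ge> 1"
    show "\<not> (snd v \<noteq> 0 \<and> fst v - A * snd v = snd v)"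
    proof
      assume h: "snd v \<noteq> 0 \<and> fst v - A * snd v = snd v"
      hence "snd v = 1 \<or> snd v = -1" using s by auto
      thus False
      proof
        assume "snd v = 1" thus False using ex1[OF v A1] h by simp
      next
        assume "snd v = -1" thus False using ex1[OF \<open>-v \<in> Yu T\<close> A1] h by (cases v) simp
      qed
    qed
  next
    assume A1: "A = -1"
    show "\<not> (snd v \<noteq> 0 \<and> fst v - A * snd v = - snd v)"
    proof
      assume h: "snd v \<noteq> 0 \<and> fst v - A * snd v = - snd v"
      hence "snd v = 1 \<or> snd v = -1" using s by auto
      thus False
      proof
        assume "snd v = 1" thus False using ex2[OF v A1] h by simp
      next
        assume "snd v = -1" thus False using ex2[OF \<open>-v \<in> Yu T\<close> A1] h by (cases v) simp
      qed
    qed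
  qed
qed

definition Tint :: "(real \<times> real) set \<Rightarrow> gam \<Rightarrow> bool" where
  "Tint T g = (T \<inter> gmap g ` T \<noteq> {})"

lemma sg_aa: "sg A B (x,y,r) (k,0,False) (k',0,False) =
   (- B * y + (if r then B - 1 else 0) + (if r then - k' else k') - k, x - A * y, r)"
  by (simp add: sg_def gcomp_def ginv_def phi_def)

lemma sg_ac: "sg A B (x,y,r) (k,0,False) gc = (- B * y + (if r then B - 1 else 0) - k, x - A * y, \<not> r)"
  by (simp add: sg_def gcomp_def ginv_def phi_def gc_def)

lemma sg_ca: "sg A B (x,y,r) gc (k',0,False) =
   (- (- B * y + (if r then B - 1 else 0)) - (if r then - k' else k'), - (x - A * y), \<not> r)"
  by (simp add: sg_def gcomp_def ginv_def phi_def gc_def)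

lemma sg_cc: "sg A B (x,y,r) gc gc = (- (- B * y + (if r then B - 1 else 0)), - (x - A * y), r)"
  by (simp add: sg_def gcomp_def ginv_def phi_def gc_def)

lemma Dset_mem: "B \<ge> 2 \<Longrightarrow> 0 \<le> k \<Longrightarrow> k \<le> B - 2 \<Longrightarrow> (k,0,False) \<in> Dset B"
  unfolding Dset_def gid_def by auto

lemma Dset_gc: "gc \<in> Dset B"
  unfolding Dset_def by auto

lemma T_step:
  assumes T: "is_T A B T" and h: "Tint T g"
  shows "\<exists>d\<in>Dset B. \<exists>d'\<in>Dset B. Tint T (sg A B g d d')"
proof -
  obtain w where w: "w \<in> T" "gmap g w \<in> T" using h unfolding Tint_def by blast
  obtain d a where da: "d \<in> Dset B" "a \<in> T" "gfun A B (gmap g w) = gmap d a" using T_bwd[OF T w(2)] by blast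
  obtain d' b where db: "d' \<in> Dset B" "b \<in> T" "gfun A B w = gmap d' b" using T_bwd[OF T w(1)] by blast
  have "gfun A B (gmap g w) = gmap d (gmap (sg A B g d d') b)" using key_conj[OF db(3)] .
  hence "a = gmap (sg A B g d d') b" using da(3) gmap_inj by metis
  hence "Tint T (sg A B g d d')" using da(2) db(2) unfolding Tint_def by blast
  thus ?thesis using da(1) db(1) by blast
qed

lemma Tint_Yu:
  assumes h: "Tint T (p,q,r)" shows "(p,q) \<in> Yu T"
proof -
  obtain w where w: "w \<in> T" "gmap (p,q,r) w \<in> T" using h unfolding Tint_def by blast
  have z: "gmap (p,q,r) w - tr (p,q) = (if r then - w else w)" by (simp add: gmap_def tr_def)
  have "gmap (p,q,r) w \<in> UU T" using w(2) by (simp add: UU_def)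
  moreover have "(if r then - w else w) \<in> UU T" using w(1) by (simp add: UU_def)
  ultimately show ?thesis unfolding Yu_def using z by (metis (mono_tags, lifting) mem_Collect_eq)
qed

lemma Tint_inE:
  assumes prm: "-1 \<le> A" "A \<le> B" "B \<ge> 2" "2 * A < B + 3" and T: "is_T A B T"
    and h: "Tint T (p,q,r)" shows "inE A (p,q)"
  using Yu_inE[OF prm T Tint_Yu[OF h]] .

lemma excl_crit:
  assumes prm: "-1 \<le> A" "A \<le> B" "B \<ge> 2" "2 * A < B + 3" and T: "is_T A B T"
    and aa: "\<And>k k'. 0 \<le> k \<Longrightarrow> k \<le> B - 2 \<Longrightarrow> 0 \<le> k' \<Longrightarrow> k' \<le> B - 2 \<Longrightarrow>
           \<not> inE A (- B * y + (if r then B - 1 else 0) + (if r then - k' else k') - k, x - A * y)"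
    and ac: "\<And>k. 0 \<le> k \<Longrightarrow> k \<le> B - 2 \<Longrightarrow> \<not> inE A (- B * y + (if r then B - 1 else 0) - k, x - A * y)"
    and ca: "\<And>k'. 0 \<le> k' \<Longrightarrow> k' \<le> B - 2 \<Longrightarrow>
           \<not> inE A (- (- B * y + (if r then B - 1 else 0)) - (if r then - k' else k'), - (x - A * y))"
    and cc: "\<not> inE A (- (- B * y + (if r then B - 1 else 0)), - (x - A * y))"
  shows "\<not> Tint T (x,y,r)"
proof
  assume h: "Tint T (x,y,r)"
  obtain d d' where dd: "d \<in> Dset B" "d' \<in> Dset B" "Tint T (sg A B (x,y,r) d d')"
    using T_step[OF T h] by blast
  obtain p q r' where pqr: "sg A B (x,y,r) d d' = (p,q,r')" by (cases "sg A B (x,y,r) d d'")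
  have i: "inE A (p,q)" using Tint_inE[OF prm T] dd(3) pqr by simp
  have tr_eq: "inE A (a, b)" if "sg A B (x,y,r) d d' = (a, b, c)" for a b c
  proof -
    have "(p,q,r') = (a,b,c)" using pqr that by simp
    hence "p = a" "q = b" by (simp_all only: prod.inject)
    thus ?thesis using i by (simp only:)
  qed
  from Dset_cases[OF dd(1) prm(3)] Dset_cases[OF dd(2) prm(3)] show False
  proof (elim disjE exE conjE)
    assume e: "d = gc" "d' = gc"
    have "sg A B (x,y,r) d d' = (- (- B * y + (if r then B - 1 else 0)), - (x - A * y), r)"
      by (simp only: e sg_cc)
    thus False using tr_eq cc by blast
  next
    fix k' assume e: "d = gc" "0 \<le> k'" "k' \<le> B - 2" "d' = (k',0,False)"
    have "sg A B (x,y,r) d d' = (- (- B * y + (if r then B - 1 else 0)) - (if r then - k' else k'), - (x - A * y), \<not> r)"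
      by (simp only: e sg_ca)
    thus False using tr_eq ca[OF e(2,3)] by blast
  next
    fix k assume e: "d' = gc" "0 \<le> k" "k \<le> B - 2" "d = (k,0,False)"
    have "sg A B (x,y,r) d d' = (- B * y + (if r then B - 1 else 0) - k, x - A * y, \<not> r)"
      by (simp only: e sg_ac)
    thus False using tr_eq ac[OF e(2,3)] by blast
  next
    fix k k' assume e: "0 \<le> k" "k \<le> B - 2" "d = (k,0,False)" "0 \<le> k'" "k' \<le> B - 2" "d' = (k',0,False)"
    have "sg A B (x,y,r) d d' = (- B * y + (if r then B - 1 else 0) + (if r then - k' else k') - k, x - A * y, r)"
      by (simp only: e sg_aa)
    thus False using tr_eq aa[OF e(1,2,4,5)] by blast
  qed
qed

context
  fixes A B :: int and T :: "(real \<times> real) set"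
  assumes prm: "-1 \<le> A" "A \<le> B" "B \<ge> 2" "2 * A < B + 3" and T: "is_T A B T"
begin

lemma excl_pos:
  assumes "A > 0"
  shows "\<not> Tint T (A,1,False)" "\<not> Tint T (-A,-1,False)" "\<not> Tint T (-A,-1,True)"
proof -
  show "\<not> Tint T (A,1,False)" using assms prm by (intro excl_crit[OF prm T]) (auto simp: inE_def abs_le_iff)
  show "\<not> Tint T (-A,-1,False)" using assms prm by (intro excl_crit[OF prm T]) (auto simp: inE_def abs_le_iff)
  show "\<not> Tint T (-A,-1,True)" using assms prm by (intro excl_crit[OF prm T]) (auto simp: inE_def abs_le_iff)
qed

lemma excl_m1:
  assumes "A = -1"
  shows "\<not> Tint T (-1,1,False)" "\<not> Tint T (0,1,False)" "\<not> Tint T (1,-1,False)" "\<not> Tint T (0,-1,False)" "\<not> Tint T (1,-1,True)" "\<not> Tint T (0,-1,True)"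
proof -
  show "\<not> Tint T (-1,1,False)" using assms prm by (intro excl_crit[OF prm T]) (auto simp: inE_def abs_le_iff)
  show "\<not> Tint T (0,1,False)" using assms prm by (intro excl_crit[OF prm T]) (auto simp: inE_def abs_le_iff)
  show "\<not> Tint T (1,-1,False)" using assms prm by (intro excl_crit[OF prm T]) (auto simp: inE_def abs_le_iff)
  show "\<not> Tint T (0,-1,False)" using assms prm by (intro excl_crit[OF prm T]) (auto simp: inE_def abs_le_iff)
  show "\<not> Tint T (1,-1,True)" using assms prm by (intro excl_crit[OF prm T]) (auto simp: inE_def abs_le_iff)
  show "\<not> Tint T (0,-1,True)" using assms prm by (intro excl_crit[OF prm T]) (auto simp: inE_def abs_le_iff)
qed

lemma excl_0:
  assumes "A = 0"
  shows "\<not> Tint T (1,1,False)" "\<not> Tint T (-1,-1,False)" "\<not> Tint T (1,-1,False)" "\<not> Tint T (-1,1,False)" "\<not> Tint T (0,1,False)" "\<not> Tint T (0,-1,False)" "\<not> Tint T (-1,-1,True)" "\<not> Tint T (1,-1,True)" "\<not> Tint T (0,-1,True)"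
proof -
  show "\<not> Tint T (1,1,False)" using assms prm by (intro excl_crit[OF prm T]) (auto simp: inE_def abs_le_iff)
  show "\<not> Tint T (-1,-1,False)" using assms prm by (intro excl_crit[OF prm T]) (auto simp: inE_def abs_le_iff)
  show "\<not> Tint T (1,-1,False)" using assms prm by (intro excl_crit[OF prm T]) (auto simp: inE_def abs_le_iff)
  show "\<not> Tint T (-1,1,False)" using assms prm by (intro excl_crit[OF prm T]) (auto simp: inE_def abs_le_iff)
  show "\<not> Tint T (0,1,False)" using assms prm by (intro excl_crit[OF prm T]) (auto simp: inE_def abs_le_iff)
  show "\<not> Tint T (0,-1,False)" using assms prm by (intro excl_crit[OF prm T]) (auto simp: inE_def abs_le_iff)
  show "\<not> Tint T (-1,-1,True)" using assms prm by (intro excl_crit[OF prm T]) (auto simp: inE_def abs_le_iff)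
  show "\<not> Tint T (1,-1,True)" using assms prm by (intro excl_crit[OF prm T]) (auto simp: inE_def abs_le_iff)
  show "\<not> Tint T (0,-1,True)" using assms prm by (intro excl_crit[OF prm T]) (auto simp: inE_def abs_le_iff)
qed

end

definition CL :: "int \<Rightarrow> int \<Rightarrow> gam set \<Rightarrow> gam \<Rightarrow> bool" where
  "CL A B X g = (\<exists>d\<in>Dset B. \<exists>d'\<in>Dset B. sg A B g d d' \<in> X)"

lemma wit_aa: "B \<ge> 2 \<Longrightarrow> 0 \<le> k \<Longrightarrow> k \<le> B - 2 \<Longrightarrow> 0 \<le> k' \<Longrightarrow> k' \<le> B - 2 \<Longrightarrow>
   (- B * y + (if r then B - 1 else 0) + (if r then - k' else k') - k, x - A * y, r) \<in> X \<Longrightarrow> CL A B X (x,y,r)"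
  unfolding CL_def using Dset_mem[of B k] Dset_mem[of B k'] sg_aa[of A B x y r k k'] by metis

lemma wit_ac: "B \<ge> 2 \<Longrightarrow> 0 \<le> k \<Longrightarrow> k \<le> B - 2 \<Longrightarrow>
   (- B * y + (if r then B - 1 else 0) - k, x - A * y, \<not> r) \<in> X \<Longrightarrow> CL A B X (x,y,r)"
  unfolding CL_def using Dset_mem[of B k] Dset_gc[of B] sg_ac[of A B x y r k] by metis

lemma wit_ca: "B \<ge> 2 \<Longrightarrow> 0 \<le> k' \<Longrightarrow> k' \<le> B - 2 \<Longrightarrow>
   (- (- B * y + (if r then B - 1 else 0)) - (if r then - k' else k'), - (x - A * y), \<not> r) \<in> X \<Longrightarrow> CL A B X (x,y,r)"
  unfolding CL_def using Dset_mem[of B k'] Dset_gc[of B] sg_ca[of A B x y r k'] by metis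

lemma wit_cc: "(- (- B * y + (if r then B - 1 else 0)), - (x - A * y), r) \<in> X \<Longrightarrow> CL A B X (x,y,r)"
  unfolding CL_def using Dset_gc[of B] sg_cc[of A B x y r] by metis

definition LCL :: "int \<Rightarrow> int \<Rightarrow> (int \<times> int) set \<Rightarrow> int \<times> int \<Rightarrow> bool" where
  "LCL A B X v = (\<exists>k k'. 0 \<le> k \<and> k \<le> B - 1 \<and> 0 \<le> k' \<and> k' \<le> B - 1 \<and> lsucc A B v k k' \<in> X)"

lemma lwit: "0 \<le> k \<Longrightarrow> k \<le> B - 1 \<Longrightarrow> 0 \<le> k' \<Longrightarrow> k' \<le> B - 1 \<Longrightarrow>
   (- B * y + k' - k, x - A * y) \<in> X \<Longrightarrow> LCL A B X (x,y)"
  unfolding LCL_def lsucc_def by auto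

context
  fixes A B :: int and T Tl :: "(real \<times> real) set"
  assumes prm: "-1 \<le> A" "A \<le> B" "B \<ge> 2" "2 * A < B + 3" and T: "is_T A B T" and Tl: "is_Tl A B Tl"
begin

lemma T_lower_X:
  assumes "finite X" "\<And>g. g \<in> X \<Longrightarrow> CL A B X g" "g \<in> X"
  shows "Tint T g"
  using T_lower[OF prm T assms(1) _ assms(3)] assms(2) unfolding CL_def Tint_def by blast

lemma Tl_lower_X:
  assumes "finite X" "\<And>v. v \<in> X \<Longrightarrow> LCL A B X v" "v \<in> X"
  shows "\<exists>q\<in>Tl. q + tr v \<in> Tl"
  using Tl_lower[OF prm Tl assms(1) _ assms(3)] assms(2) unfolding LCL_def by blast

definition Eset :: "(int \<times> int) set" where
  "Eset = (if A \<ge> 1 then {(0,0),(1,0),(-1,0),(A,1),(-A,-1),(A-1,1),(1-A,-1)}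
         else if A = 0 then {-1,0,1} \<times> {-1,0,1}
         else {(0,0),(1,0),(-1,0),(0,1),(0,-1),(-1,1),(1,-1)})"

lemma Eset_closed: "v \<in> Eset \<Longrightarrow> LCL A B Eset v"
proof -
  assume v: "v \<in> Eset"
  consider (p) "A \<ge> 1" | (z) "A = 0" | (m) "A = -1" using prm by linarith
  thus ?thesis
  proof cases
    case p
    hence E: "Eset = {(0,0),(1,0),(-1,0),(A,1),(-A,-1),(A-1,1),(1-A,-1)}" unfolding Eset_def by simp
    have "LCL A B Eset (0,0)" by (rule lwit[of 0 B 0]) (use prm E in auto)
    moreover have "LCL A B Eset (1,0)" by (rule lwit[of 0 B "A-1"]) (use prm p E in auto)
    moreover have "LCL A B Eset (-1,0)" by (rule lwit[of "A-1" B 0]) (use prm p E in auto)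
    moreover have "LCL A B Eset (A,1)" by (rule lwit[of 0 B "B-1"]) (use prm p E in auto)
    moreover have "LCL A B Eset (-A,-1)" by (rule lwit[of "B-1" B 0]) (use prm p E in auto)
    moreover have "LCL A B Eset (A-1,1)" by (rule lwit[of 0 B "B-A"]) (use prm p E in auto)
    moreover have "LCL A B Eset (1-A,-1)" by (rule lwit[of "B-A" B 0]) (use prm p E in auto)
    ultimately show ?thesis using v E by auto
  next
    case z
    hence E: "Eset = {-1,0,1} \<times> {-1,0,1}" unfolding Eset_def by simp
    obtain x y where xy: "v = (x,y)" by (cases v)
    have "y = -1 \<or> y = 0 \<or> y = 1" using v xy E by auto
    hence "LCL A B Eset (x,y)"
    proof (elim disjE)
      assume "y = -1" thus ?thesis using xy v E z prm by (intro lwit[of "B-1" B 0]) auto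
    next
      assume "y = 0" thus ?thesis using xy v E z prm by (intro lwit[of 0 B 0]) auto
    next
      assume "y = 1" thus ?thesis using xy v E z prm by (intro lwit[of 0 B "B-1"]) auto
    qed
    thus ?thesis using xy by simp
  next
    case m
    hence E: "Eset = {(0,0),(1,0),(-1,0),(0,1),(0,-1),(-1,1),(1,-1)}" unfolding Eset_def by simp
    have "LCL A B Eset (0,0)" by (rule lwit[of 0 B 0]) (use prm E in auto)
    moreover have "LCL A B Eset (1,0)" by (rule lwit[of 0 B 0]) (use prm m E in auto)
    moreover have "LCL A B Eset (-1,0)" by (rule lwit[of 0 B 0]) (use prm m E in auto)
    moreover have "LCL A B Eset (0,1)" by (rule lwit[of 0 B "B-1"]) (use prm m E in auto)
    moreover have "LCL A B Eset (0,-1)" by (rule lwit[of "B-1" B 0]) (use prm m E in auto)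
    moreover have "LCL A B Eset (-1,1)" by (rule lwit[of 0 B "B-1"]) (use prm m E in auto)
    moreover have "LCL A B Eset (1,-1)" by (rule lwit[of "B-1" B 0]) (use prm m E in auto)
    ultimately show ?thesis using v E by auto
  qed
qed

lemma Eset_finite: "finite Eset" unfolding Eset_def by auto

lemma Eset_lower: "v \<in> Eset \<Longrightarrow> \<exists>q\<in>Tl. q + tr v \<in> Tl"
  using Tl_lower_X[OF Eset_finite Eset_closed] .

lemma inE_Eset: "inE A v \<Longrightarrow> v \<in> Eset"
proof -
  assume h: "inE A v"
  obtain x y where xy: "v = (x,y)" by (cases v)
  define t where "t = x - A * y"
  have x: "x = t + A * y" unfolding t_def by simp
  have y: "y = -1 \<or> y = 0 \<or> y = 1" and tt: "t = -1 \<or> t = 0 \<or> t = 1"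
    using h xy unfolding inE_def t_def by auto
  have ex: "A \<ge> 1 \<Longrightarrow> \<not> (y \<noteq> 0 \<and> t = y)" "A = -1 \<Longrightarrow> \<not> (y \<noteq> 0 \<and> t = -y)"
    using h xy unfolding inE_def t_def by auto
  consider (p) "A \<ge> 1" | (z) "A = 0" | (m) "A = -1" using prm by linarith
  hence "(x,y) \<in> Eset"
  proof cases
    case p
    hence E: "Eset = {(0,0),(1,0),(-1,0),(A,1),(-A,-1),(A-1,1),(1-A,-1)}" unfolding Eset_def by simp
    from y tt show ?thesis unfolding x E using ex(1)[OF p]
      by (elim disjE) (simp_all add: algebra_simps)
  next
    case z
    hence E: "Eset = {-1,0,1} \<times> {-1,0,1}" unfolding Eset_def by simp
    from y tt show ?thesis unfolding x E using z by (elim disjE) simp_all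
  next
    case m
    hence E: "Eset = {(0,0),(1,0),(-1,0),(0,1),(0,-1),(-1,1),(1,-1)}" unfolding Eset_def by simp
    from y tt show ?thesis unfolding x E using ex(2)[OF m] m
      by (elim disjE) (simp_all add: algebra_simps)
  qed
  thus ?thesis using xy by simp
qed

end

context
  fixes A B :: int and T Tl :: "(real \<times> real) set"
  assumes prm: "-1 \<le> A" "A \<le> B" "B \<ge> 2" "2 * A < B + 3" and T: "is_T A B T" and Tl: "is_Tl A B Tl"
begin

lemma low_gid: "(0,0,False) \<in> X \<Longrightarrow> CL A B X (0,0,False)"
  by (rule wit_aa[of B 0 0]) (use prm in auto)

lemma lower6:
  assumes fin: "finite (nbr T)" and X: "X = insert (0,0,False) X6" and g: "(0,0,False) \<notin> X6"
    and c: "card X6 = 6" and cl: "\<And>g. g \<in> X \<Longrightarrow> CL A B X g"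
  shows "6 \<le> card (nbr T)"
proof -
  have "finite X6" using c by (metis card.infinite zero_neq_numeral)
  hence fX: "finite X" using X by simp
  have "X6 \<subseteq> nbr T"
  proof
    fix h assume h: "h \<in> X6"
    have "Tint T h" using T_lower_X[OF prm T Tl fX cl] h X by blast
    moreover have "h \<noteq> gid" using g h by (auto simp: gid_def)
    ultimately show "h \<in> nbr T" unfolding nbr_def Tint_def by simp
  qed
  from card_mono[OF fin this] c show ?thesis by simp
qed

lemma lower_bound:
  assumes fin: "finite (nbr T)"
  shows "6 \<le> card (nbr T)"
proof -
  consider (a3) "A \<ge> 3" | (a2) "A = 2" "B \<ge> 3" | (a22) "A = 2" "B = 2" | (a1) "A = 1" | (a0) "A = 0"
    | (m3) "A = -1" "B \<ge> 3" | (m2) "A = -1" "B = 2" using prm by linarith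
  thus ?thesis
  proof cases
    case a3
    define X6 :: "gam set" where "X6 = {(0,0,True),(1,0,True),(A,1,True),(A-1,1,True),(1-A,-1,True),(1,0,False)}"
    define X where "X = insert (0,0,False) X6"
    have B: "B \<ge> 2*A - 2" using prm by linarith
    show ?thesis
    proof (rule lower6[OF fin, of X X6])
      show "X = insert (0,0,False) X6" by (rule X_def)
      show "(0,0,False) \<notin> X6" using a3 unfolding X6_def by auto
      show "card X6 = 6" using a3 unfolding X6_def by auto
      fix g assume "g \<in> X"
      moreover have "CL A B X (0,0,False)" by (rule low_gid) (simp add: X_def)
      moreover have "CL A B X (0,0,True)" by (rule wit_aa[of B 0 "B-2"]) (use prm in \<open>auto simp: X_def X6_def\<close>)
      moreover have "CL A B X (1,0,True)" by (rule wit_aa[of B 0 "B-1-A"]) (use prm a3 B in \<open>auto simp: X_def X6_def\<close>)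
      moreover have "CL A B X (A,1,True)" by (rule wit_cc) (use prm in \<open>auto simp: X_def X6_def\<close>)
      moreover have "CL A B X (A-1,1,True)" by (rule wit_aa[of B 0 "A-2"]) (use prm a3 in \<open>auto simp: X_def X6_def\<close>)
      moreover have "CL A B X (1-A,-1,True)" by (rule wit_aa[of B "B-2" "B+1-A"]) (use prm a3 in \<open>auto simp: X_def X6_def\<close>)
      moreover have "CL A B X (1,0,False)" by (rule wit_ca[of B "A-1"]) (use prm a3 B in \<open>auto simp: X_def X6_def\<close>)
      ultimately show "CL A B X g" unfolding X_def X6_def by blast
    qed
  next
    case a2
    define X6 :: "gam set" where "X6 = {(0,0,True),(1,0,True),(2,1,True),(1,1,True),(1,0,False),(1,1,False)}"
    define X where "X = insert (0,0,False) X6"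
    show ?thesis
    proof (rule lower6[OF fin, of X X6])
      show "X = insert (0,0,False) X6" by (rule X_def)
      show "(0,0,False) \<notin> X6" unfolding X6_def by auto
      show "card X6 = 6" unfolding X6_def by auto
      fix g assume "g \<in> X"
      moreover have "CL A B X (0,0,False)" by (rule low_gid) (simp add: X_def)
      moreover have "CL A B X (0,0,True)" by (rule wit_aa[of B 0 "B-2"]) (use prm in \<open>auto simp: X_def X6_def\<close>)
      moreover have "CL A B X (1,0,True)" by (rule wit_aa[of B 0 "B-3"]) (use prm a2 in \<open>auto simp: X_def X6_def\<close>)
      moreover have "CL A B X (2,1,True)" by (rule wit_cc) (use prm a2 in \<open>auto simp: X_def X6_def\<close>)
      moreover have "CL A B X (1,1,True)" by (rule wit_cc) (use prm a2 in \<open>auto simp: X_def X6_def\<close>)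
      moreover have "CL A B X (1,0,False)" by (rule wit_aa[of B 0 1]) (use prm a2 in \<open>auto simp: X_def X6_def\<close>)
      moreover have "CL A B X (1,1,False)" by (rule wit_ca[of B "B-2"]) (use prm a2 in \<open>auto simp: X_def X6_def\<close>)
      ultimately show "CL A B X g" unfolding X_def X6_def by blast
    qed
  next
    case a22
    define X6 :: "gam set" where "X6 = {(0,0,True),(1,0,True),(1,1,True),(2,1,True),(1,1,False),(-1,-1,False)}"
    define X where "X = insert (0,0,False) X6"
    show ?thesis
    proof (rule lower6[OF fin, of X X6])
      show "X = insert (0,0,False) X6" by (rule X_def)
      show "(0,0,False) \<notin> X6" unfolding X6_def by auto
      show "card X6 = 6" unfolding X6_def by auto
      fix g assume "g \<in> X"
      moreover have "CL A B X (0,0,False)" by (rule low_gid) (simp add: X_def)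
      moreover have "CL A B X (0,0,True)" by (rule wit_aa[of B 0 0]) (use prm a22 in \<open>auto simp: X_def X6_def\<close>)
      moreover have "CL A B X (1,0,True)" by (rule wit_aa[of B 0 0]) (use prm a22 in \<open>auto simp: X_def X6_def\<close>)
      moreover have "CL A B X (1,1,True)" by (rule wit_cc) (use prm a22 in \<open>auto simp: X_def X6_def\<close>)
      moreover have "CL A B X (2,1,True)" by (rule wit_cc) (use prm a22 in \<open>auto simp: X_def X6_def\<close>)
      moreover have "CL A B X (1,1,False)" by (rule wit_ca[of B 0]) (use prm a22 in \<open>auto simp: X_def X6_def\<close>)
      moreover have "CL A B X (-1,-1,False)" by (rule wit_ac[of B 0]) (use prm a22 in \<open>auto simp: X_def X6_def\<close>)
      ultimately show "CL A B X g" unfolding X_def X6_def by blast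
    qed
  next
    case a1
    define X6 :: "gam set" where "X6 = {(0,0,True),(1,0,True),(1,1,True),(0,1,True),(1,0,False),(-1,0,False)}"
    define X where "X = insert (0,0,False) X6"
    show ?thesis
    proof (rule lower6[OF fin, of X X6])
      show "X = insert (0,0,False) X6" by (rule X_def)
      show "(0,0,False) \<notin> X6" unfolding X6_def by auto
      show "card X6 = 6" unfolding X6_def by auto
      fix g assume "g \<in> X"
      moreover have "CL A B X (0,0,False)" by (rule low_gid) (simp add: X_def)
      moreover have "CL A B X (0,0,True)" by (rule wit_aa[of B 0 "B-2"]) (use prm in \<open>auto simp: X_def X6_def\<close>)
      moreover have "CL A B X (1,0,True)" by (rule wit_aa[of B 0 "B-2"]) (use prm a1 in \<open>auto simp: X_def X6_def\<close>)
      moreover have "CL A B X (1,1,True)" by (rule wit_cc) (use prm a1 in \<open>auto simp: X_def X6_def\<close>)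
      moreover have "CL A B X (0,1,True)" by (rule wit_cc) (use prm a1 in \<open>auto simp: X_def X6_def\<close>)
      moreover have "CL A B X (1,0,False)" by (rule wit_ac[of B 0]) (use prm a1 in \<open>auto simp: X_def X6_def\<close>)
      moreover have "CL A B X (-1,0,False)" by (rule wit_ca[of B 0]) (use prm a1 in \<open>auto simp: X_def X6_def\<close>)
      ultimately show "CL A B X g" unfolding X_def X6_def by blast
    qed
  next
    case a0
    define X6 :: "gam set" where "X6 = {(0,0,True),(1,0,True),(1,1,True),(-1,1,True),(0,1,True),(1,0,False)}"
    define X where "X = insert (0,0,False) X6"
    show ?thesis
    proof (rule lower6[OF fin, of X X6])
      show "X = insert (0,0,False) X6" by (rule X_def)
      show "(0,0,False) \<notin> X6" unfolding X6_def by auto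
      show "card X6 = 6" unfolding X6_def by auto
      fix g assume "g \<in> X"
      moreover have "CL A B X (0,0,False)" by (rule low_gid) (simp add: X_def)
      moreover have "CL A B X (0,0,True)" by (rule wit_aa[of B 0 "B-2"]) (use prm in \<open>auto simp: X_def X6_def\<close>)
      moreover have "CL A B X (1,0,True)" by (rule wit_aa[of B 0 "B-2"]) (use prm a0 in \<open>auto simp: X_def X6_def\<close>)
      moreover have "CL A B X (1,1,True)" by (rule wit_aa[of B 0 0]) (use prm a0 in \<open>auto simp: X_def X6_def\<close>)
      moreover have "CL A B X (-1,1,True)" by (rule wit_cc) (use prm a0 in \<open>auto simp: X_def X6_def\<close>)
      moreover have "CL A B X (0,1,True)" by (rule wit_cc) (use prm a0 in \<open>auto simp: X_def X6_def\<close>)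
      moreover have "CL A B X (1,0,False)" by (rule wit_ac[of B 0]) (use prm a0 in \<open>auto simp: X_def X6_def\<close>)
      ultimately show "CL A B X g" unfolding X_def X6_def by blast
    qed
  next
    case m3
    define X6 :: "gam set" where "X6 = {(0,0,True),(1,0,False),(-1,0,False),(0,1,True),(-1,1,True),(1,0,True)}"
    define X where "X = insert (0,0,False) X6"
    show ?thesis
    proof (rule lower6[OF fin, of X X6])
      show "X = insert (0,0,False) X6" by (rule X_def)
      show "(0,0,False) \<notin> X6" unfolding X6_def by auto
      show "card X6 = 6" unfolding X6_def by auto
      fix g assume "g \<in> X"
      moreover have "CL A B X (0,0,False)" by (rule low_gid) (simp add: X_def)
      moreover have "CL A B X (0,0,True)" by (rule wit_ac[of B "B-2"]) (use prm in \<open>auto simp: X_def X6_def\<close>)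
      moreover have "CL A B X (1,0,False)" by (rule wit_ac[of B 0]) (use prm m3 in \<open>auto simp: X_def X6_def\<close>)
      moreover have "CL A B X (-1,0,False)" by (rule wit_ca[of B 0]) (use prm m3 in \<open>auto simp: X_def X6_def\<close>)
      moreover have "CL A B X (0,1,True)" by (rule wit_aa[of B 0 0]) (use prm m3 in \<open>auto simp: X_def X6_def\<close>)
      moreover have "CL A B X (-1,1,True)" by (rule wit_ac[of B 0]) (use prm m3 in \<open>auto simp: X_def X6_def\<close>)
      moreover have "CL A B X (1,0,True)" by (rule wit_aa[of B 1 "B-2"]) (use prm m3 in \<open>auto simp: X_def X6_def\<close>)
      ultimately show "CL A B X g" unfolding X_def X6_def by blast
    qed
  next
    case m2
    define X6 :: "gam set" where "X6 = {(0,0,True),(1,0,False),(-1,0,False),(0,1,True),(-1,1,True),(-1,0,True)}"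
    define X where "X = insert (0,0,False) X6"
    show ?thesis
    proof (rule lower6[OF fin, of X X6])
      show "X = insert (0,0,False) X6" by (rule X_def)
      show "(0,0,False) \<notin> X6" unfolding X6_def by auto
      show "card X6 = 6" unfolding X6_def by auto
      fix g assume "g \<in> X"
      moreover have "CL A B X (0,0,False)" by (rule low_gid) (simp add: X_def)
      moreover have "CL A B X (0,0,True)" by (rule wit_ac[of B "B-2"]) (use prm m2 in \<open>auto simp: X_def X6_def\<close>)
      moreover have "CL A B X (1,0,False)" by (rule wit_ac[of B 0]) (use prm m2 in \<open>auto simp: X_def X6_def\<close>)
      moreover have "CL A B X (-1,0,False)" by (rule wit_ca[of B 0]) (use prm m2 in \<open>auto simp: X_def X6_def\<close>)
      moreover have "CL A B X (0,1,True)" by (rule wit_aa[of B 0 0]) (use prm m2 in \<open>auto simp: X_def X6_def\<close>)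
      moreover have "CL A B X (-1,1,True)" by (rule wit_ac[of B 0]) (use prm m2 in \<open>auto simp: X_def X6_def\<close>)
      moreover have "CL A B X (-1,0,True)" by (rule wit_cc) (use prm m2 in \<open>auto simp: X_def X6_def\<close>)
      ultimately show "CL A B X g" unfolding X_def X6_def by blast
    qed
  qed
qed

end

context
  fixes A B :: int and T Tl :: "(real \<times> real) set"
  assumes prm: "-1 \<le> A" "A \<le> B" "B \<ge> 2" "2 * A < B + 3" and T: "is_T A B T" and Tl: "is_Tl A B Tl"
begin

lemma nbr_Tint: "g \<in> nbr T \<Longrightarrow> Tint T g \<and> g \<noteq> gid"
  unfolding nbr_def Tint_def by auto

lemma nbr_Eset: "(p,q,r) \<in> nbr T \<Longrightarrow> (p,q) \<in> Eset A"
  using nbr_Tint Tint_inE[OF prm T] inE_Eset[OF prm T Tl] by blast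

lemma nbr_Sprime: "g \<in> nbr T \<Longrightarrow> g \<in> Sprime Tl"
proof -
  assume g: "g \<in> nbr T"
  obtain p q r where pqr: "g = (p,q,r)" by (cases g)
  have E: "(p,q) \<in> Eset A" using nbr_Eset g pqr by blast
  have ng: "g \<noteq> gid" using nbr_Tint[OF g] by blast
  show ?thesis
  proof (cases "(p,q) = (0,0)")
    case True
    hence "r" using ng pqr by (auto simp: gid_def)
    hence "g = gc" using True pqr by (simp add: gc_def)
    thus ?thesis unfolding Sprime_def by simp
  next
    case False
    obtain w where w: "w \<in> Tl" "w + tr (p,q) \<in> Tl" using Eset_lower[OF prm T Tl E] by blast
    have "gmap (p,q,False) w = w + tr (p,q)" by (simp add: gmap_def tr_def)
    hence "Tl \<inter> gmap (p,q,False) ` Tl \<noteq> {}" using w by (metis IntI empty_iff image_eqI)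
    moreover have "(p,q,False) \<noteq> gid" using False by (simp add: gid_def)
    ultimately have nl: "(p,q,False) \<in> nbr_l Tl" unfolding nbr_l_def by blast
    show ?thesis
    proof (cases r)
      case False thus ?thesis using nl pqr unfolding Sprime_def by simp
    next
      case True
      hence "g = comp_c (p,q,False)" using pqr by (simp add: comp_c_def)
      thus ?thesis using nl unfolding Sprime_def by blast
    qed
  qed
qed

lemma nbr_list: "\<exists>L. nbr T \<subseteq> set L \<and> length L \<le> 10"
proof -
  consider (p) "A \<ge> 1" | (z) "A = 0" | (m) "A = -1" using prm by linarith
  thus ?thesis
  proof cases
    case p
    have E: "Eset A = {(0,0),(1,0),(-1,0),(A,1),(-A,-1),(A-1,1),(1-A,-1)}" using Eset_def[OF prm T Tl] p by simp
    have p0: "A > 0" using p by simp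
    note ex = excl_pos[OF prm T p0]
    have "nbr T \<subseteq> set [(1,0,False),(-1,0,False),(A-1,1,False),(1-A,-1,False),(0,0,True),(1,0,True),
                       (-1,0,True),(A,1,True),(A-1,1,True),(1-A,-1,True)]"
    proof
      fix g assume g: "g \<in> nbr T"
      obtain x y r where g': "g = (x,y,r)" by (cases g)
      have "(x,y) \<in> Eset A" using nbr_Eset g g' by blast
      moreover have "Tint T (x,y,r)" "(x,y,r) \<noteq> gid" using nbr_Tint g g' by auto
      ultimately show "g \<in> set [(1,0,False),(-1,0,False),(A-1,1,False),(1-A,-1,False),(0,0,True),(1,0,True),
                       (-1,0,True),(A,1,True),(A-1,1,True),(1-A,-1,True)]"
        using ex p unfolding E g' gid_def by (cases r) auto
    qed
    thus ?thesis by (intro exI[of _ "[(1,0,False),(-1,0,False),(A-1,1,False),(1-A,-1,False),(0,0,True),(1,0,True),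
                       (-1,0,True),(A,1,True),(A-1,1,True),(1-A,-1,True)]"]) simp
  next
    case z
    have E: "Eset A = {-1,0,1} \<times> {-1,0,1}" using Eset_def[OF prm T Tl] z by simp
    note ex = excl_0[OF prm T z]
    have "nbr T \<subseteq> set [(1,0,False),(-1,0,False),(0,0,True),(1,0,True),(-1,0,True),(1,1,True),(-1,1,True),(0,1,True)]"
    proof
      fix g assume g: "g \<in> nbr T"
      obtain x y r where g': "g = (x,y,r)" by (cases g)
      have "(x,y) \<in> Eset A" using nbr_Eset g g' by blast
      moreover have "Tint T (x,y,r)" "(x,y,r) \<noteq> gid" using nbr_Tint g g' by auto
      ultimately show "g \<in> set [(1,0,False),(-1,0,False),(0,0,True),(1,0,True),(-1,0,True),(1,1,True),(-1,1,True),(0,1,True)]"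
        using ex unfolding E g' gid_def by (cases r) auto
    qed
    thus ?thesis by (intro exI[of _ "[(1,0,False),(-1,0,False),(0,0,True),(1,0,True),(-1,0,True),(1,1,True),(-1,1,True),(0,1,True)]"]) simp
  next
    case m
    have E: "Eset A = {(0,0),(1,0),(-1,0),(0,1),(0,-1),(-1,1),(1,-1)}" using Eset_def[OF prm T Tl] m by simp
    note ex = excl_m1[OF prm T m]
    have "nbr T \<subseteq> set [(1,0,False),(-1,0,False),(0,0,True),(1,0,True),(-1,0,True),(0,1,True),(-1,1,True)]"
    proof
      fix g assume g: "g \<in> nbr T"
      obtain x y r where g': "g = (x,y,r)" by (cases g)
      have "(x,y) \<in> Eset A" using nbr_Eset g g' by blast
      moreover have "Tint T (x,y,r)" "(x,y,r) \<noteq> gid" using nbr_Tint g g' by auto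
      ultimately show "g \<in> set [(1,0,False),(-1,0,False),(0,0,True),(1,0,True),(-1,0,True),(0,1,True),(-1,1,True)]"
        using ex unfolding E g' gid_def by (cases r) auto
    qed
    thus ?thesis by (intro exI[of _ "[(1,0,False),(-1,0,False),(0,0,True),(1,0,True),(-1,0,True),(0,1,True),(-1,1,True)]"]) simp
  qed
qed

lemma main_fin: "finite (nbr T) \<and> 6 \<le> card (nbr T) \<and> card (nbr T) \<le> 10"
proof -
  obtain L where L: "nbr T \<subseteq> set L" "length L \<le> 10" using nbr_list by blast
  have f: "finite (nbr T)" using L(1) finite_subset by blast
  have "card (nbr T) \<le> card (set L)" using card_mono[OF _ L(1)] by simp
  also have "\<dots> \<le> length L" by (rule card_length)
  finally show ?thesis using f lower_bound[OF prm T Tl f] L(2) by simp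
qed

lemma notin_nbr: "\<not> Tint T g \<Longrightarrow> g \<notin> nbr T"
  using nbr_Tint by blast

end

theorem lemma3p6:
  fixes A B :: int and T Tl :: "(real \<times> real) set"
  assumes "-1 \<le> A" "A \<le> B" "B \<ge> 2" "2 * A < B + 3"
    and "is_T A B T" and "is_Tl A B Tl"
  shows "(A > 0 \<longrightarrow> nbr T \<subseteq> Sprime Tl - {(A, 1, False), (-A, -1, False), (-A, -1, True)})
       \<and> (A = -1 \<longrightarrow> nbr T \<subseteq> Sprime Tl - {(-1, 1, False), (0, 1, False), (1, -1, False),
                                        (0, -1, False), (1, -1, True), (0, -1, True)})
       \<and> (A = 0 \<longrightarrow> nbr T \<subseteq> Sprime Tl - {(1, 1, False), (-1, -1, False), (1, -1, False),
                                       (-1, 1, False), (0, 1, False), (0, -1, False),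
                                       (-1, -1, True), (1, -1, True), (0, -1, True)})
       \<and> finite (nbr T) \<and> 6 \<le> card (nbr T) \<and> card (nbr T) \<le> 10"
proof -
  note prm = assms(1-4) and T = assms(5) and Tl = assms(6)
  have S: "nbr T \<subseteq> Sprime Tl" using nbr_Sprime[OF prm T Tl] by blast
  note ni = notin_nbr[OF prm T Tl]
  have c1: "A > 0 \<longrightarrow> nbr T \<subseteq> Sprime Tl - {(A, 1, False), (-A, -1, False), (-A, -1, True)}"
  proof
    assume a: "A > 0"
    note e = excl_pos[OF prm T a]
    show "nbr T \<subseteq> Sprime Tl - {(A, 1, False), (-A, -1, False), (-A, -1, True)}"
      using S ni[OF e(1)] ni[OF e(2)] ni[OF e(3)] by blast
  qed
  have c2: "A = -1 \<longrightarrow> nbr T \<subseteq> Sprime Tl - {(-1, 1, False), (0, 1, False), (1, -1, False),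
                                        (0, -1, False), (1, -1, True), (0, -1, True)}"
  proof
    assume a: "A = -1"
    note e = excl_m1[OF prm T a]
    show "nbr T \<subseteq> Sprime Tl - {(-1, 1, False), (0, 1, False), (1, -1, False),
                                        (0, -1, False), (1, -1, True), (0, -1, True)}"
      using S ni[OF e(1)] ni[OF e(2)] ni[OF e(3)] ni[OF e(4)] ni[OF e(5)] ni[OF e(6)] by blast
  qed
  have c3: "A = 0 \<longrightarrow> nbr T \<subseteq> Sprime Tl - {(1, 1, False), (-1, -1, False), (1, -1, False),
                                       (-1, 1, False), (0, 1, False), (0, -1, False),
                                       (-1, -1, True), (1, -1, True), (0, -1, True)}"
  proof
    assume a: "A = 0"
    note e = excl_0[OF prm T a]
    show "nbr T \<subseteq> Sprime Tl - {(1, 1, False), (-1, -1, False), (1, -1, False),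
                                       (-1, 1, False), (0, 1, False), (0, -1, False),
                                       (-1, -1, True), (1, -1, True), (0, -1, True)}"
      using S ni[OF e(1)] ni[OF e(2)] ni[OF e(3)] ni[OF e(4)] ni[OF e(5)] ni[OF e(6)]
        ni[OF e(7)] ni[OF e(8)] ni[OF e(9)] by blast
  qed
  show ?thesis using c1 c2 c3 main_fin[OF prm T Tl] by blast
qed

end
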